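(* Let $\xi>0$ and let $g:\mathbb R\to\mathbb R$ be real-analytic with $g(x+2\pi)=e^{-2\pi\xi}g(x)$ for all $x$, and let $(c_k)_{k\in\mathbb Z}$ be the Fourier coefficients of the $2\pi$-periodic function $\theta\mapsto e^{\xi\theta}g(\theta)$. Let $\tilde\rho_{g,-\xi}=\sum_{k\in\mathbb Z}c_k\rho_{-\xi,k}$. If $\tilde\rho_{g,-\xi}(x)>0$ for all $x>0$, then $\sum_{k\in\mathbb Z}\frac{c_k}{\xi-ik}\le0$.
   Context: $\rho_1(z)=z\int_0^z e^{-s^2}ds$ is entire and even, so there is an entire $\rho_2$ with $\rho_1(z)=\rho_2(z^2)$. For $\eta\in\mathbb R$, $k\in\mathbb Z$, $\rho_{\eta,k}(z)=\frac2\pi\big(2e^{(\eta+ik)z}\rho_2((\eta+ik)z)+1\big)$. The Fourier coefficients $c_k=\frac1{2\pi}\int_0^{2\pi}e^{\xi\theta}g(\theta)e^{-ik\theta}d\theta$ decay exponentially, so the series defining $\tilde\rho_{g,-\xi}$ converges locally uniformly on a strip around $\mathbb R$ to a real-analytic function on $\mathbb R$. *)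

theory Defs
  imports "HOL-Complex_Analysis.Complex_Analysis" "HOL-Library.Complex_Order"
begin

definition rho1 :: "complex \<Rightarrow> complex" where
  "rho1 z = z * contour_integral (linepath 0 z) (\<lambda>s. exp (- (s\<^sup>2)))"

text \<open>rho2 is the entire function with rho1 z = rho2 (z^2); since rho1 is even,
  rho2 w = rho1 (sqrt w) for any choice of square root.\<close>
definition rho2 :: "complex \<Rightarrow> complex" where
  "rho2 w = rho1 (csqrt w)"

definition rho_ek :: "real \<Rightarrow> int \<Rightarrow> complex \<Rightarrow> complex" where
  "rho_ek \<eta> k z = (2 / pi) * (2 * exp ((of_real \<eta> + \<i> * of_int k) * z)
        * rho2 ((of_real \<eta> + \<i> * of_int k) * z) + 1)"

definition real_analytic :: "(real \<Rightarrow> real) \<Rightarrow> bool" where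
  "real_analytic g \<longleftrightarrow> (\<forall>x. \<exists>r>0. \<exists>a::nat \<Rightarrow> real.
      \<forall>y. \<bar>y - x\<bar> < r \<longrightarrow> (\<lambda>n. a n * (y - x) ^ n) sums g y)"

definition fourier_coeff :: "real \<Rightarrow> (real \<Rightarrow> real) \<Rightarrow> int \<Rightarrow> complex" where
  "fourier_coeff \<xi> g k = (1 / (2 * pi)) *
     integral {0..2*pi} (\<lambda>\<theta>. of_real (exp (\<xi> * \<theta>) * g \<theta>) * exp (- \<i> * of_int k * of_real \<theta>))"

definition rho_tilde :: "real \<Rightarrow> (real \<Rightarrow> real) \<Rightarrow> real \<Rightarrow> complex" where
  "rho_tilde \<xi> g x = (\<Sum>\<^sub>\<infinity>k::int. fourier_coeff \<xi> g k * rho_ek (- \<xi>) k (of_real x))"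

end

theory Submission
  imports Defs
begin


lemma summable_int_inv_sq:
  fixes \<xi> :: real assumes xi: "\<xi> > 0"
  shows "(\<lambda>k::int. 1 / (\<xi>\<^sup>2 + (of_int k)\<^sup>2)) summable_on UNIV"
proof -
  define C where "C = 2 * (1 + 1/\<xi>\<^sup>2)"
  have Cpos: "C > 0" unfolding C_def by (simp add: add_pos_nonneg)
  have bnd: "1 / (\<xi>\<^sup>2 + r\<^sup>2) \<le> C * (1 / (\<bar>r\<bar> + 1)\<^sup>2)" for r :: real
  proof -
    have p: "\<xi>\<^sup>2 + r\<^sup>2 > 0" using xi by (simp add: add_pos_nonneg)
    have "(\<bar>r\<bar> + 1)\<^sup>2 \<le> 2 + 2 * r\<^sup>2"
    proof -
      have "0 \<le> (\<bar>r\<bar> - 1)\<^sup>2" by simp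
      then show ?thesis by (simp add: power2_eq_square algebra_simps)
    qed
    also have "\<dots> \<le> C * (\<xi>\<^sup>2 + r\<^sup>2)" 
    proof -
      have "C * (\<xi>\<^sup>2 + r\<^sup>2) = 2 * \<xi>\<^sup>2 + 2 * r\<^sup>2 + 2 + 2 * r\<^sup>2 / \<xi>\<^sup>2"
        unfolding C_def using xi by (simp add: field_simps)
      moreover have "r\<^sup>2 / \<xi>\<^sup>2 \<ge> 0" by simp
      ultimately show ?thesis by simp
    qed
    finally have "(\<bar>r\<bar> + 1)\<^sup>2 \<le> C * (\<xi>\<^sup>2 + r\<^sup>2)" .
    moreover have "(\<bar>r\<bar> + 1)\<^sup>2 > 0" by (simp add: add_pos_nonneg)
    ultimately show ?thesis using p Cpos by (simp add: divide_simps)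
  qed
  have s1: "summable (\<lambda>n::nat. 1 / (real n + 1)\<^sup>2)"
    using sums_summable[OF inverse_squares_sums] by (simp add: add.commute)
  have s2: "summable (\<lambda>n::nat. 1 / (\<xi>\<^sup>2 + (real n)\<^sup>2))"
  proof (rule summable_comparison_test'[OF summable_mult[OF s1, of C], of 0])
    fix n :: nat
    have "1 / (\<xi>\<^sup>2 + (real n)\<^sup>2) \<le> C * (1 / (\<bar>real n\<bar> + 1)\<^sup>2)" by (rule bnd)
    then show "norm (1 / (\<xi>\<^sup>2 + (real n)\<^sup>2)) \<le> C * (1 / (real n + 1)\<^sup>2)" by simp
  qed
  have s3: "summable (\<lambda>n::nat. 1 / (\<xi>\<^sup>2 + (- 1 - real n)\<^sup>2))"
  proof -
    have "summable (\<lambda>n::nat. 1 / (\<xi>\<^sup>2 + (real (n + 1))\<^sup>2))"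
      by (rule summable_ignore_initial_segment[OF s2])
    moreover have "(1 + real n)\<^sup>2 = (- 1 - real n)\<^sup>2" for n :: nat
      by (simp add: power2_eq_square algebra_simps)
    ultimately show ?thesis by (simp add: add.commute)
  qed
  have a: "(\<lambda>k::int. 1 / (\<xi>\<^sup>2 + (of_int k)\<^sup>2)) summable_on range int"
    by (subst summable_on_reindex) (auto simp: o_def intro!: summable_nonneg_imp_summable_on s2)
  have b: "(\<lambda>k::int. 1 / (\<xi>\<^sup>2 + (of_int k)\<^sup>2)) summable_on range (\<lambda>n. - int (Suc n))"
    by (subst summable_on_reindex) (auto simp: o_def inj_on_def add.commute intro!: summable_nonneg_imp_summable_on s3)
  have U: "UNIV = range int \<union> range (\<lambda>n. - int (Suc n))"
  proof -
    have "k \<in> range int \<union> range (\<lambda>n. - int (Suc n))" for k :: int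
    proof (cases "k \<ge> 0")
      case True then show ?thesis by (metis UnI1 nonneg_int_cases rangeI)
    next
      case False then have "k = - int (Suc (nat (-k - 1)))" by simp
      then show ?thesis by blast
    qed
    then show ?thesis by blast
  qed
  have "(\<lambda>k::int. 1 / (\<xi>\<^sup>2 + (of_int k)\<^sup>2)) summable_on (range int \<union> range (\<lambda>n. - int (Suc n)))"
    by (rule summable_on_Un_disjoint[OF a b]) auto
  then show ?thesis using U by simp
qed


lemma ra_local:
  assumes "real_analytic g"
  shows "\<exists>r>0. \<exists>D. \<forall>y. \<bar>y - x0\<bar> < r \<longrightarrow> (g has_real_derivative D y) (at y) \<and>
     (\<exists>b. \<forall>y. \<bar>y - x0\<bar> < r \<longrightarrow> (\<lambda>n. b n * (y - x0) ^ n) sums D y)"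
proof -
  obtain r a where r: "r > 0" and sa: "\<And>y. \<bar>y - x0\<bar> < r \<Longrightarrow> (\<lambda>n. a n * (y - x0) ^ n) sums g y"
    using assms unfolding real_analytic_def by blast
  define h where "h z = (\<Sum>n. a n * z ^ n)" for z :: real
  define D where "D z = (\<Sum>n. diffs a n * z ^ n)" for z :: real
  have sm: "summable (\<lambda>n. a n * z ^ n)" if "norm z < r" for z :: real
    using sa[of "x0 + z"] that by (auto simp: sums_iff)
  have hd: "(h has_real_derivative D z) (at z)" if "norm z < r" for z :: real
    unfolding h_def D_def by (rule termdiffs_strong'[of r]) (use sm that in auto)
  have gh: "g y = h (y - x0)" if "\<bar>y - x0\<bar> < r" for y
    using sa[OF that] unfolding h_def by (simp add: sums_iff)
  have gd: "(g has_real_derivative D (y - x0)) (at y)" if "\<bar>y - x0\<bar> < r" for y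
  proof -
    have "((\<lambda>y. h (y - x0)) has_real_derivative D (y - x0) * 1) (at y)"
      by (rule DERIV_chain2[OF hd]) (use that in \<open>auto intro!: derivative_eq_intros\<close>)
    then have "((\<lambda>y. h (y - x0)) has_real_derivative D (y - x0)) (at y)" by simp
    then show ?thesis
      by (rule has_field_derivative_transform_within_open[where S = "ball x0 r"])
         (use that gh in \<open>auto simp: dist_real_def abs_minus_commute\<close>)
  qed
  have ds: "(\<lambda>n. diffs a n * (y - x0) ^ n) sums D (y - x0)" if "\<bar>y - x0\<bar> < r" for y
    unfolding D_def by (rule summable_sums, rule termdiff_converges[of _ r]) (use sm that in auto)
  show ?thesis
    by (rule exI[of _ r], use r in simp, rule exI[of _ "\<lambda>y. D (y - x0)"]) (use gd ds in blast)
qed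

lemma ra_deriv:
  assumes "real_analytic g"
  shows "(g has_real_derivative deriv g x) (at x)" and "real_analytic (deriv g)"
proof -
  show "(g has_real_derivative deriv g x) (at x)"
    using ra_local[OF assms, of x] by (metis DERIV_imp_deriv abs_zero diff_self)
  show "real_analytic (deriv g)"
    unfolding real_analytic_def
  proof
    fix x0
    obtain r D b where r: "r > 0" and d: "\<And>y. \<bar>y - x0\<bar> < r \<Longrightarrow> (g has_real_derivative D y) (at y)"
      and s: "\<And>y. \<bar>y - x0\<bar> < r \<Longrightarrow> (\<lambda>n. b n * (y - x0) ^ n) sums D y"
      using ra_local[OF assms, of x0] by blast
    have "\<forall>y. \<bar>y - x0\<bar> < r \<longrightarrow> (\<lambda>n. b n * (y - x0) ^ n) sums deriv g y"
      using d s DERIV_imp_deriv by metis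
    then show "\<exists>r>0. \<exists>a. \<forall>y. \<bar>y - x0\<bar> < r \<longrightarrow> (\<lambda>n. a n * (y - x0) ^ n) sums deriv g y"
      using r by blast
  qed
qed

lemma quasi_deriv:
  fixes g :: "real \<Rightarrow> real"
  assumes "real_analytic g" and "\<And>x. g (x + p) = q * g x"
  shows "deriv g (x + p) = q * deriv g x"
proof -
  have "((\<lambda>x. g (x + p)) has_real_derivative deriv g (x + p) * 1) (at x)"
    by (rule DERIV_chain2[OF ra_deriv(1)[OF assms(1)]]) (auto intro!: derivative_eq_intros)
  moreover have "((\<lambda>x. g (x + p)) has_real_derivative q * deriv g x) (at x)"
    unfolding assms(2) by (auto intro!: derivative_eq_intros ra_deriv(1)[OF assms(1)])
  ultimately show ?thesis using DERIV_unique by fastforce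
qed

lemmas ra_deriv1 = ra_deriv(1)
lemmas ra_deriv2 = ra_deriv(2)


lemma ra_cont: assumes "real_analytic g" shows "continuous_on S g"
  by (meson DERIV_isCont continuous_at_imp_continuous_on assms ra_deriv1)

definition II :: "(real \<Rightarrow> real) \<Rightarrow> complex \<Rightarrow> complex" where
  "II p l = integral {0..2*pi} (\<lambda>\<theta>. complex_of_real (p \<theta>) * exp (l * of_real \<theta>))"

lemma II_integrable: assumes "continuous_on {0..2*pi} p"
  shows "(\<lambda>\<theta>. complex_of_real (p \<theta>) * exp (l * of_real \<theta>)) integrable_on {0..2*pi}"
  by (rule integrable_continuous_interval) (intro continuous_intros assms)

lemma II_ibp:
  assumes ra: "real_analytic p" and ra': "real_analytic (deriv p)"
    and bd: "complex_of_real (p (2*pi)) * exp (l * of_real (2*pi)) = complex_of_real (p 0)"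
  shows "l * II p l = - II (deriv p) l"
proof -
  define F where "F \<theta> = complex_of_real (p \<theta>) * exp (l * of_real \<theta>)" for \<theta>
  have "((\<lambda>\<theta>. complex_of_real (p \<theta>) * (l * exp (l * of_real \<theta>)) + complex_of_real (deriv p \<theta>) * exp (l * of_real \<theta>))
      has_integral F (2*pi) - F 0) {0..2*pi}"
  proof (rule fundamental_theorem_of_calculus)
    fix x assume "x \<in> {0..2*pi}"
    have e: "((\<lambda>z. exp (l * z)) has_field_derivative l * exp (l * of_real x)) (at (of_real x))"
      by (auto intro!: derivative_eq_intros)
    show "(F has_vector_derivative complex_of_real (p x) * (l * exp (l * of_real x)) + complex_of_real (deriv p x) * exp (l * of_real x))
        (at x within {0..2*pi})"
      unfolding F_def
      by (rule has_vector_derivative_mult[OF has_vector_derivative_of_real[OF has_field_derivative_at_within[OF ra_deriv1[OF ra]]]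
             has_vector_derivative_real_field[OF e]])
  qed simp
  moreover have "F (2*pi) - F 0 = 0" using bd unfolding F_def by simp
  ultimately have "integral {0..2*pi} (\<lambda>\<theta>. l * (complex_of_real (p \<theta>) * exp (l * of_real \<theta>)) + complex_of_real (deriv p \<theta>) * exp (l * of_real \<theta>)) = 0"
    by (simp add: integral_unique algebra_simps)
  moreover have "integral {0..2*pi} (\<lambda>\<theta>. l * (complex_of_real (p \<theta>) * exp (l * of_real \<theta>)) + complex_of_real (deriv p \<theta>) * exp (l * of_real \<theta>))
     = l * II p l + II (deriv p) l"
    unfolding II_def
    by (subst integral_add) (auto intro!: integrable_on_mult_right II_integrable ra_cont ra ra')
  ultimately show ?thesis by (simp add: eq_neg_iff_add_eq_0)
qed


lemma fourier_II:
  "fourier_coeff \<xi> g k = II g (of_real \<xi> - \<i> * of_int k) / (2 * pi)"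
proof -
  have eq: "complex_of_real (exp (\<xi> * \<theta>) * g \<theta>) * exp (- \<i> * of_int k * of_real \<theta>) =
        complex_of_real (g \<theta>) * exp ((of_real \<xi> - \<i> * of_int k) * of_real \<theta>)" for \<theta>
  proof -
    have "exp ((of_real \<xi> - \<i> * of_int k) * of_real \<theta>) = exp (complex_of_real (\<xi> * \<theta>) + (- \<i> * of_int k * of_real \<theta>))"
      by (rule arg_cong[where f=exp]) (simp add: algebra_simps)
    also have "\<dots> = complex_of_real (exp (\<xi> * \<theta>)) * exp (- \<i> * of_int k * of_real \<theta>)"
      by (simp only: exp_add exp_of_real)
    finally show ?thesis by (simp add: mult_ac)
  qed
  show ?thesis unfolding fourier_coeff_def II_def by (simp only: eq) simp
qed

lemma fourier_decay:
  fixes \<xi> :: real and g :: "real \<Rightarrow> real"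
  assumes xi: "\<xi> > 0" and ra: "real_analytic g"
    and qp: "\<And>x. g (x + 2 * pi) = exp (- 2 * pi * \<xi>) * g x"
  shows "\<exists>M\<ge>0. \<forall>k::int. norm (fourier_coeff \<xi> g k) \<le> M / norm (of_real \<xi> - \<i> * of_int k) ^ 4"
proof -
  define g1 where "g1 = deriv g"
  define g2 where "g2 = deriv g1"
  define g3 where "g3 = deriv g2"
  define g4 where "g4 = deriv g3"
  have r1: "real_analytic g1" unfolding g1_def by (rule ra_deriv2[OF ra])
  have r2: "real_analytic g2" unfolding g2_def by (rule ra_deriv2[OF r1])
  have r3: "real_analytic g3" unfolding g3_def by (rule ra_deriv2[OF r2])
  have r4: "real_analytic g4" unfolding g4_def by (rule ra_deriv2[OF r3])
  have q1: "g1 (x + 2 * pi) = exp (- 2 * pi * \<xi>) * g1 x" for x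
    unfolding g1_def by (rule quasi_deriv[OF ra qp])
  have q2: "g2 (x + 2 * pi) = exp (- 2 * pi * \<xi>) * g2 x" for x
    unfolding g2_def by (rule quasi_deriv[OF r1 q1])
  have q3: "g3 (x + 2 * pi) = exp (- 2 * pi * \<xi>) * g3 x" for x
    unfolding g3_def by (rule quasi_deriv[OF r2 q2])
  obtain B where B: "\<And>x. x \<in> {0..2*pi} \<Longrightarrow> norm (g4 x) \<le> B"
    using compact_imp_bounded[OF compact_continuous_image[OF ra_cont[OF r4] compact_Icc]]
    unfolding bounded_iff by (meson image_eqI)
  define M where "M = max 0 B * exp (2 * pi * \<xi>)"
  have M0: "M \<ge> 0" unfolding M_def by simp
  have "norm (fourier_coeff \<xi> g k) \<le> M / norm (of_real \<xi> - \<i> * of_int k) ^ 4" for k :: int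
  proof -
    define l where "l = of_real \<xi> - \<i> * of_int k"
    have l0: "l \<noteq> 0" using xi unfolding l_def by (auto simp: complex_eq_iff)
    have el: "exp (l * of_real (2*pi)) = of_real (exp (2 * pi * \<xi>))"
    proof -
      have "l * of_real (2*pi) = complex_of_real (2 * pi * \<xi>) + \<i> * (of_int (- k) * (of_real pi * 2))"
        unfolding l_def by (simp add: algebra_simps)
      then have "exp (l * of_real (2*pi)) = exp (complex_of_real (2 * pi * \<xi>)) * exp (\<i> * (of_int (- k) * (of_real pi * 2)))"
        by (simp only: exp_add)
      then show ?thesis by (simp only: exp_of_real exp_2pi_1_int mult_1_right)
    qed
    have bd: "complex_of_real (p (2*pi)) * exp (l * of_real (2*pi)) = complex_of_real (p 0)"
      if "\<And>x. p (x + 2 * pi) = exp (- 2 * pi * \<xi>) * p x" for p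
    proof -
      have "p (2*pi) = exp (- 2 * pi * \<xi>) * p 0" using that[of 0] by simp
      then show ?thesis unfolding el
        by (simp flip: of_real_mult add: exp_minus field_simps)
    qed
    have e1: "l * II g l = - II g1 l" unfolding g1_def by (rule II_ibp[OF ra _ bd]) (use r1 qp g1_def in auto)
    have e2: "l * II g1 l = - II g2 l" unfolding g2_def by (rule II_ibp[OF r1 _ bd]) (use r2 q1 g2_def in auto)
    have e3: "l * II g2 l = - II g3 l" unfolding g3_def by (rule II_ibp[OF r2 _ bd]) (use r3 q2 g3_def in auto)
    have e4: "l * II g3 l = - II g4 l" unfolding g4_def by (rule II_ibp[OF r3 _ bd]) (use r4 q3 g4_def in auto)
    have "l ^ 4 * II g l = II g4 l"
      using e1 e2 e3 e4 by (simp add: power4_eq_xxxx algebra_simps)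
    then have II4: "II g l = II g4 l / l ^ 4" using l0 by (simp add: field_simps)
    have "norm (II g4 l) \<le> (max 0 B * exp (2 * pi * \<xi>)) * (2 * pi - 0)"
      unfolding II_def
    proof (rule integral_bound)
      show "continuous_on {0..2 * pi} (\<lambda>\<theta>. complex_of_real (g4 \<theta>) * exp (l * complex_of_real \<theta>))"
        by (intro continuous_intros ra_cont[OF r4])
      fix t assume t: "t \<in> {0..2*pi}"
      have "norm (exp (l * complex_of_real t)) = exp (\<xi> * t)"
        unfolding l_def norm_exp_eq_Re by simp
      also have "\<dots> \<le> exp (2 * pi * \<xi>)" using t xi by (simp add: mult_left_mono mult.commute)
      finally have "norm (exp (l * complex_of_real t)) \<le> exp (2 * pi * \<xi>)" .
      moreover have "norm (complex_of_real (g4 t)) \<le> max 0 B" using B[OF t] by simp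
      ultimately show "norm (complex_of_real (g4 t) * exp (l * complex_of_real t)) \<le> max 0 B * exp (2 * pi * \<xi>)"
        unfolding norm_mult by (intro mult_mono) auto
    qed simp
    then have n4: "norm (II g4 l) \<le> M * (2 * pi)" unfolding M_def by simp
    have "norm (fourier_coeff \<xi> g k) = norm (II g l) / (2 * pi)"
      unfolding fourier_II l_def by (simp add: norm_divide)
    also have "\<dots> = norm (II g4 l) / (2 * pi) / norm l ^ 4"
      unfolding II4 by (simp add: norm_divide norm_power)
    also have "\<dots> \<le> (M * (2 * pi)) / (2 * pi) / norm l ^ 4"
      by (intro divide_right_mono n4) auto
    also have "\<dots> = M / norm l ^ 4" by simp
    finally show ?thesis unfolding l_def .
  qed
  then show ?thesis using M0 by blast
qed



lemma rho2_int: "rho2 u = u * integral {0..1} (\<lambda>t. exp (- (u * of_real t ^ 2)))"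
proof -
  define z where "z = csqrt u"
  have zz: "z ^ 2 = u" unfolding z_def by simp
  have "rho2 u = z * integral {0..1} (\<lambda>t. exp (- ((linepath 0 z t)\<^sup>2)) * z)"
    unfolding rho2_def rho1_def z_def contour_integral_integral by simp
  also have "(\<lambda>t. exp (- ((linepath 0 z t)\<^sup>2)) * z) = (\<lambda>t. exp (- (u * of_real t ^ 2)) * z)"
    by (rule ext) (simp add: linepath_def scaleR_conv_of_real power_mult_distrib zz[symmetric] mult.commute)
  also have "z * integral {0..1} (\<lambda>t. exp (- (u * of_real t ^ 2)) * z) = u * integral {0..1} (\<lambda>t. exp (- (u * of_real t ^ 2)))"
    by (simp add: zz[symmetric] power2_eq_square)
  finally show ?thesis .
qed

lemma exp_rho2: "exp u * rho2 u = u * integral {0..1} (\<lambda>t. exp (u * (1 - of_real t ^ 2)))"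
proof -
  have "(\<lambda>t. exp (u * (1 - of_real t ^ 2))) = (\<lambda>t. exp u * exp (- (u * of_real t ^ 2)))"
    by (rule ext) (simp add: exp_add[symmetric] algebra_simps)
  then show ?thesis by (simp add: rho2_int)
qed

lemma ftc1: fixes u :: complex shows "((\<lambda>t. 2 * u * of_real t * exp (u * (1 - of_real t ^ 2))) has_integral (exp u - 1)) {0..1::real}"
proof -
  have "((\<lambda>t. 2 * u * of_real t * exp (u * (1 - of_real t ^ 2))) has_integral
        ((\<lambda>t. - exp (u * (1 - of_real t ^ 2))) 1 - (\<lambda>t. - exp (u * (1 - of_real t ^ 2))) 0)) {0..1::real}"
  proof (rule fundamental_theorem_of_calculus)
    fix x :: real assume "x \<in> {0..1}"
    have "((\<lambda>z. - exp (u * (1 - z ^ 2))) has_field_derivative 2 * u * of_real x * exp (u * (1 - of_real x ^ 2))) (at (of_real x))"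
      by (auto intro!: derivative_eq_intros simp: algebra_simps)
    from has_vector_derivative_real_field[OF this]
    show "((\<lambda>t. - exp (u * (1 - of_real t ^ 2))) has_vector_derivative 2 * u * of_real x * exp (u * (1 - of_real x ^ 2))) (at x within {0..1})" .
  qed simp
  then show ?thesis by simp
qed

lemma ftc2:
  fixes u :: complex
  assumes "u \<noteq> 0"
  shows "((\<lambda>t. (1 - of_real t) * exp (2 * u * (1 - of_real t))) has_integral ((1 + exp (2 * u) * (2 * u - 1)) / (4 * u ^ 2))) {0..1::real}"
proof -
  define H where "H t = - exp (2 * u * (1 - t)) * (2 * u * (1 - t) - 1) / (4 * u ^ 2)" for t :: complex
  have "((\<lambda>t. (1 - of_real t) * exp (2 * u * (1 - of_real t))) has_integral (H (of_real 1) - H (of_real 0))) {0..1::real}"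
  proof (rule fundamental_theorem_of_calculus)
    fix x :: real assume "x \<in> {0..1}"
    have "(H has_field_derivative (1 - of_real x) * exp (2 * u * (1 - of_real x))) (at (of_real x))"
      unfolding H_def using assms
      by (auto intro!: derivative_eq_intros simp: field_simps power2_eq_square)
    from has_vector_derivative_real_field[OF this]
    show "((\<lambda>t. H (of_real t)) has_vector_derivative (1 - of_real x) * exp (2 * u * (1 - of_real x))) (at x within {0..1})" .
  qed simp
  moreover have "H (of_real 1) - H (of_real 0) = (1 + exp (2 * u) * (2 * u - 1)) / (4 * u ^ 2)"
    unfolding H_def using assms by (simp add: field_simps)
  ultimately show ?thesis by simp
qed


lemma exp_minus_one_bound:
  fixes z :: complex assumes "Re z \<ge> 0"
  shows "norm (exp z - 1) \<le> norm z * exp (Re z)"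
proof -
  have "norm (exp z - exp 0) \<le> exp (Re z) * norm (z - 0)"
  proof (rule field_differentiable_bound[where S = "closed_segment 0 z" and f' = exp])
    show "convex (closed_segment 0 z)" by simp
    fix w assume w: "w \<in> closed_segment 0 z"
    show "(exp has_field_derivative exp w) (at w within closed_segment 0 z)"
      by (auto intro!: derivative_eq_intros)
    from w obtain t where t: "0 \<le> t" "t \<le> 1" "w = t *\<^sub>R z"
      unfolding closed_segment_def by auto
    have "Re w = t * Re z" using t by simp
    also have "\<dots> \<le> Re z" using t assms by (simp add: mult_left_le_one_le)
    finally show "norm (exp w) \<le> exp (Re z)" by (simp add: norm_exp_eq_Re)
  qed auto
  then show ?thesis by (simp add: mult.commute)
qed

lemma int_s_exp:
  fixes b :: real assumes b: "b > 0"
  shows "((\<lambda>t. (1 - t) * exp (- b * (1 - t))) has_integral ((1 - exp (- b) * (b + 1)) / b ^ 2)) {0..1}"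
proof -
  define K where "K t = exp (- b * (1 - t)) * (b * (1 - t) + 1) / b ^ 2" for t
  have "((\<lambda>t. (1 - t) * exp (- b * (1 - t))) has_integral (K 1 - K 0)) {0..1}"
  proof (rule fundamental_theorem_of_calculus)
    fix x :: real assume "x \<in> {0..1}"
    show "(K has_vector_derivative (1 - x) * exp (- b * (1 - x))) (at x within {0..1})"
      unfolding K_def has_real_derivative_iff_has_vector_derivative[symmetric] using b
      by (auto intro!: derivative_eq_intros simp: field_simps power2_eq_square)
  qed simp
  moreover have "K 1 - K 0 = (1 - exp (- b) * (b + 1)) / b ^ 2"
    unfolding K_def using b by (simp add: field_simps)
  ultimately show ?thesis by simp
qed

lemma int_s_exp_le:
  fixes b :: real assumes b: "b > 0"
  shows "integral {0..1} (\<lambda>t. (1 - t) * exp (- b * (1 - t))) \<le> 1 / b ^ 2"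
proof -
  have "integral {0..1} (\<lambda>t. (1 - t) * exp (- b * (1 - t))) = (1 - exp (- b) * (b + 1)) / b ^ 2"
    using int_s_exp[OF b] by (rule integral_unique)
  also have "\<dots> \<le> 1 / b ^ 2" using b by (intro divide_right_mono) auto
  finally show ?thesis .
qed

lemma s3_bound:
  fixes a s :: real assumes a: "a > 0" and s: "0 \<le> s"
  shows "s ^ 3 * exp (- a * s) \<le> (16 / a ^ 2) * (s * exp (- (a / 2) * s))"
proof -
  have "a * s / 4 \<le> exp (a * s / 4)" using exp_ge_add_one_self[of "a * s / 4"] by linarith
  then have "(a * s / 4) ^ 2 \<le> (exp (a * s / 4)) ^ 2"
    using a s by (intro power_mono) auto
  also have "\<dots> = exp (a * s / 2)" by (simp flip: exp_of_nat_mult)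
  finally have 1: "a ^ 2 * s ^ 2 \<le> 16 * exp (a * s / 2)" by (simp add: power_mult_distrib field_simps)
  have "s ^ 3 * exp (- a * s) = (s ^ 2 * exp (- (a / 2) * s)) * (s * exp (- (a / 2) * s))"
    by (simp add: power3_eq_cube power2_eq_square field_simps flip: exp_add)
  also have "s ^ 2 * exp (- (a / 2) * s) \<le> 16 / a ^ 2"
  proof -
    have "s ^ 2 * exp (- (a / 2) * s) = s ^ 2 / exp (a * s / 2)" by (simp add: exp_minus field_simps)
    also have "\<dots> \<le> 16 / a ^ 2" using 1 a by (simp add: field_simps)
    finally show ?thesis .
  qed
  then have "(s ^ 2 * exp (- (a / 2) * s)) * (s * exp (- (a / 2) * s)) \<le> (16 / a ^ 2) * (s * exp (- (a / 2) * s))"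
    using s by (intro mult_right_mono) auto
  finally show ?thesis .
qed

lemma int_s3_le:
  fixes a :: real assumes a: "a > 0"
  shows "integral {0..1} (\<lambda>t. (1 - t) ^ 3 * exp (- a * (1 - t))) \<le> 64 / a ^ 4"
proof -
  have "integral {0..1} (\<lambda>t. (1 - t) ^ 3 * exp (- a * (1 - t))) \<le>
        integral {0..1} (\<lambda>t. (16 / a ^ 2) * ((1 - t) * exp (- (a / 2) * (1 - t))))"
  proof (rule integral_le)
    show "(\<lambda>t. (1 - t) ^ 3 * exp (- a * (1 - t))) integrable_on {0..1}"
      by (auto intro!: integrable_continuous_interval continuous_intros)
    show "(\<lambda>t. (16 / a ^ 2) * ((1 - t) * exp (- (a / 2) * (1 - t)))) integrable_on {0..1}"
      using a by (auto intro!: integrable_continuous_interval continuous_intros)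
    fix t :: real assume "t \<in> {0..1}"
    then show "(1 - t) ^ 3 * exp (- a * (1 - t)) \<le> (16 / a ^ 2) * ((1 - t) * exp (- (a / 2) * (1 - t)))"
      using s3_bound[OF a, of "1 - t"] by simp
  qed
  also have "\<dots> = (16 / a ^ 2) * integral {0..1} (\<lambda>t. (1 - t) * exp (- (a / 2) * (1 - t)))"
    by simp
  also have "\<dots> \<le> (16 / a ^ 2) * (1 / (a / 2) ^ 2)"
    using a by (intro mult_left_mono int_s_exp_le) auto
  also have "\<dots> = 64 / a ^ 4" using a by (simp add: field_simps power2_eq_square power4_eq_xxxx)
  finally show ?thesis .
qed

lemma Q_bound:
  fixes u :: complex and t :: real
  assumes a: "Re u < 0" and t: "t \<in> {0..1}"
  shows "norm ((1 - of_real t) * (exp (u * (1 - of_real t ^ 2)) - exp (2 * u * (1 - of_real t))))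
         \<le> norm u * ((1 - t) ^ 3 * exp (Re u * (1 - t)))"
proof -
  define s where "s = 1 - t"
  have s: "0 \<le> s" "s \<le> 1" using t unfolding s_def by auto
  have e1: "exp (u * (1 - of_real t ^ 2)) = exp (2 * u * of_real s + (- (u * of_real s ^ 2)))"
    by (rule arg_cong[where f=exp]) (simp add: s_def algebra_simps power2_eq_square)
  have e2: "exp (2 * u * (1 - of_real t)) = exp (2 * u * of_real s)" by (simp add: s_def)
  have "exp (u * (1 - of_real t ^ 2)) - exp (2 * u * (1 - of_real t)) =
       exp (2 * u * of_real s) * (exp (- (u * of_real s ^ 2)) - 1)"
    unfolding e1 e2 exp_add by (simp add: algebra_simps)
  moreover have "norm (1 - complex_of_real t) = s"
    using s unfolding s_def by (metis of_real_1 of_real_diff norm_of_real abs_of_nonneg)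
  ultimately have A: "norm ((1 - of_real t) * (exp (u * (1 - of_real t ^ 2)) - exp (2 * u * (1 - of_real t))))
       = s * (exp (2 * Re u * s) * norm (exp (- (u * of_real s ^ 2)) - 1))"
    by (simp add: norm_mult norm_exp_eq_Re)
  have "norm (exp (- (u * of_real s ^ 2)) - 1) \<le> norm (- (u * of_real s ^ 2)) * exp (Re (- (u * of_real s ^ 2)))"
    by (rule exp_minus_one_bound) (use a in \<open>simp add: power2_eq_square mult_nonpos_nonneg\<close>)
  also have "norm (- (u * of_real s ^ 2)) * exp (Re (- (u * of_real s ^ 2))) = norm u * s ^ 2 * exp (- Re u * s ^ 2)"
    by (simp add: norm_mult norm_power power2_eq_square)
  finally have B: "norm (exp (- (u * of_real s ^ 2)) - 1) \<le> norm u * s ^ 2 * exp (- Re u * s ^ 2)" .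
  have "s * (exp (2 * Re u * s) * norm (exp (- (u * of_real s ^ 2)) - 1))
      \<le> s * (exp (2 * Re u * s) * (norm u * s ^ 2 * exp (- Re u * s ^ 2)))"
    using B s by (intro mult_left_mono) auto
  also have "\<dots> = norm u * (s ^ 3 * exp (2 * Re u * s - Re u * s ^ 2))"
    by (simp add: exp_diff exp_minus field_simps power3_eq_cube power2_eq_square)
  also have "\<dots> \<le> norm u * (s ^ 3 * exp (Re u * s))"
  proof -
    have ss: "s ^ 2 \<le> s" using s by (simp add: power2_eq_square mult_left_le_one_le)
    have "- Re u * s ^ 2 \<le> - Re u * s" by (rule mult_left_mono[OF ss]) (use a in simp)
    then have "exp (2 * Re u * s - Re u * s ^ 2) \<le> exp (Re u * s)" by (simp add: mult.commute)
    then show ?thesis using s by (intro mult_left_mono) auto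
  qed
  finally show ?thesis unfolding A s_def .
qed

lemma f_bound:
  fixes u :: complex assumes a: "Re u < 0"
  shows "norm (2 * exp u * rho2 u + 1 - 1 / (2 * u))
     \<le> exp (Re u) + exp (2 * Re u) * (1 + 1 / (2 * norm u)) + 128 * norm u ^ 2 / (Re u) ^ 4"
proof -
  have u0: "u \<noteq> 0" using a by auto
  define e where "e t = exp (u * (1 - of_real t ^ 2))" for t :: real
  define P where "P t = (1 - of_real t) * exp (2 * u * (1 - of_real t))" for t :: real
  define Q where "Q t = (1 - of_real t) * (e t - exp (2 * u * (1 - of_real t)))" for t :: real
  have ce: "continuous_on {0..1} e" unfolding e_def by (intro continuous_intros)
  have iTe: "(\<lambda>t. of_real t * e t) integrable_on {0..1}"
    unfolding e_def by (intro integrable_continuous_interval continuous_intros)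
  have iP: "P integrable_on {0..1}"
    unfolding P_def by (intro integrable_continuous_interval continuous_intros)
  have iQ: "Q integrable_on {0..1}"
    unfolding Q_def e_def by (intro integrable_continuous_interval continuous_intros)
  have "integral {0..1} e = integral {0..1} (\<lambda>t. of_real t * e t + P t + Q t)"
    by (rule integral_cong) (simp add: P_def Q_def algebra_simps)
  also have "\<dots> = integral {0..1} (\<lambda>t. of_real t * e t) + integral {0..1} P + integral {0..1} Q"
    using iTe iP iQ by (simp add: integral_add integrable_add)
  finally have J: "integral {0..1} e = integral {0..1} (\<lambda>t. of_real t * e t) + integral {0..1} P + integral {0..1} Q" .
  have T: "2 * u * integral {0..1} (\<lambda>t. of_real t * e t) = exp u - 1"
  proof -
    have "integral {0..1} (\<lambda>t. 2 * u * of_real t * exp (u * (1 - of_real t ^ 2))) = exp u - 1"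
      by (rule integral_unique[OF ftc1])
    then show ?thesis unfolding e_def by (simp add: mult.assoc)
  qed
  have PP: "integral {0..1} P = (1 + exp (2 * u) * (2 * u - 1)) / (4 * u ^ 2)"
    unfolding P_def by (rule integral_unique[OF ftc2[OF u0]])
  have main: "2 * exp u * rho2 u + 1 - 1 / (2 * u) = exp u + exp (2 * u) * (2 * u - 1) / (2 * u) + 2 * u * integral {0..1} Q"
  proof -
    have "2 * exp u * rho2 u + 1 = 2 * u * integral {0..1} e + 1"
      using exp_rho2[of u] unfolding e_def by simp
    also have "\<dots> = (exp u - 1) + 2 * u * integral {0..1} P + 2 * u * integral {0..1} Q + 1"
      unfolding J using T by (simp add: algebra_simps)
    finally have X: "2 * exp u * rho2 u + 1 = exp u + 2 * u * integral {0..1} P + 2 * u * integral {0..1} Q"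
      by simp
    have Y: "2 * u * integral {0..1} P - 1 / (2 * u) = exp (2 * u) * (2 * u - 1) / (2 * u)"
      unfolding PP using u0 by (simp add: field_simps power2_eq_square)
    have "2 * exp u * rho2 u + 1 - 1 / (2 * u) = exp u + (2 * u * integral {0..1} P - 1 / (2 * u)) + 2 * u * integral {0..1} Q"
      unfolding X by (simp add: algebra_simps)
    then show ?thesis unfolding Y .
  qed
  have nQ: "norm (integral {0..1} Q) \<le> norm u * (64 / (- Re u) ^ 4)"
  proof -
    have "norm (integral {0..1} Q) \<le> integral {0..1} (\<lambda>t. norm u * ((1 - t) ^ 3 * exp (- (- Re u) * (1 - t))))"
    proof (rule integral_norm_bound_integral[OF iQ])
      show "(\<lambda>t. norm u * ((1 - t) ^ 3 * exp (- (- Re u) * (1 - t)))) integrable_on {0..1}"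
        by (intro integrable_continuous_interval continuous_intros)
      fix t :: real assume "t \<in> {0..1}"
      then show "norm (Q t) \<le> norm u * ((1 - t) ^ 3 * exp (- (- Re u) * (1 - t)))"
        using Q_bound[OF a] unfolding Q_def e_def by simp
    qed
    also have "\<dots> = norm u * integral {0..1} (\<lambda>t. (1 - t) ^ 3 * exp (- (- Re u) * (1 - t)))"
      by simp
    also have "\<dots> \<le> norm u * (64 / (- Re u) ^ 4)"
      by (intro mult_left_mono int_s3_le) (use a in auto)
    finally show ?thesis .
  qed
  have "norm (2 * exp u * rho2 u + 1 - 1 / (2 * u)) \<le>
      norm (exp u) + norm (exp (2 * u) * (2 * u - 1) / (2 * u)) + norm (2 * u * integral {0..1} Q)"
    unfolding main by (intro norm_triangle_le add_mono norm_triangle_ineq order.refl)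
  also have "norm (exp u) = exp (Re u)" by (simp add: norm_exp_eq_Re)
  also have "norm (exp (2 * u) * (2 * u - 1) / (2 * u)) \<le> exp (2 * Re u) * (1 + 1 / (2 * norm u))"
  proof -
    have "norm (exp (2 * u) * (2 * u - 1) / (2 * u)) = exp (2 * Re u) * (norm (2 * u - 1) / (2 * norm u))"
      by (simp add: norm_mult norm_divide norm_exp_eq_Re)
    also have "norm (2 * u - 1) / (2 * norm u) \<le> (2 * norm u + 1) / (2 * norm u)"
      using u0 by (intro divide_right_mono) (auto intro: order.trans[OF norm_triangle_ineq4] simp: norm_mult)
    also have "(2 * norm u + 1) / (2 * norm u) = 1 + 1 / (2 * norm u)" using u0 by (simp add: field_simps)
    finally show ?thesis by simp
  qed
  also have "norm (2 * u * integral {0..1} Q) \<le> 128 * norm u ^ 2 / (Re u) ^ 4"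
  proof -
    have "norm (2 * u * integral {0..1} Q) = 2 * norm u * norm (integral {0..1} Q)" by (simp add: norm_mult)
    also have "\<dots> \<le> 2 * norm u * (norm u * (64 / (- Re u) ^ 4))" by (intro mult_left_mono nQ) auto
    also have "\<dots> = 128 * norm u ^ 2 / (Re u) ^ 4" by (simp add: power2_eq_square)
    finally show ?thesis .
  qed
  finally show ?thesis by simp
qed


lemma x_exp_bound:
  fixes a x :: real assumes a: "a > 0" and x: "x > 0"
  shows "x * exp (- (a * x)) \<le> 4 / (a ^ 2 * x)"
proof -
  have "a * x / 2 \<le> exp (a * x / 2)" using exp_ge_add_one_self[of "a * x / 2"] by linarith
  then have "(a * x / 2) ^ 2 \<le> (exp (a * x / 2)) ^ 2"
    using a x by (intro power_mono) auto
  also have "\<dots> = exp (a * x)" by (simp flip: exp_of_nat_mult)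
  finally have 1: "a ^ 2 * x ^ 2 \<le> 4 * exp (a * x)" by (simp add: power_mult_distrib field_simps)
  have "x * exp (- (a * x)) = x ^ 2 / (x * exp (a * x))" using x by (simp add: exp_minus field_simps power2_eq_square)
  also have "\<dots> \<le> 4 / (a ^ 2 * x)" using 1 a x by (simp add: field_simps)
  finally show ?thesis .
qed

lemma rho_k_bound:
  fixes \<xi> x :: real and k :: int
  assumes xi: "\<xi> > 0" and x: "x \<ge> 1"
  shows "norm (of_real x * rho_ek (- \<xi>) k (of_real x) + 1 / (of_real pi * (of_real \<xi> - \<i> * of_int k)))
         \<le> (2 / pi) * (136 + 2 / \<xi>) / \<xi> ^ 4 * norm (of_real \<xi> - \<i> * of_int k) ^ 2 / x"
proof -
  define l where "l = of_real \<xi> - \<i> * of_int k"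
  define u where "u = - l * of_real x"
  define N where "N = norm l"
  have x0: "x > 0" using x by simp
  have Ng: "N \<ge> \<xi>" unfolding N_def l_def using complex_Re_le_cmod[of "of_real \<xi> - \<i> * of_int k"] by simp
  have N0: "N > 0" using Ng xi by simp
  have l0: "l \<noteq> 0" using N0 unfolding N_def by auto
  have Reu: "Re u = - (\<xi> * x)" unfolding u_def l_def by simp
  have nu: "norm u = N * x" unfolding u_def N_def using x0 by (simp add: norm_mult)
  have uu: "(of_real (- \<xi>) + \<i> * of_int k) * of_real x = u" unfolding u_def l_def by (simp add: algebra_simps)
  define E where "E = 2 * exp u * rho2 u + 1 - 1 / (2 * u)"
  have key: "of_real x * rho_ek (- \<xi>) k (of_real x) + 1 / (of_real pi * l) = (2 / of_real pi) * (of_real x * E)"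
  proof -
    have "rho_ek (- \<xi>) k (of_real x) = (2 / of_real pi) * (E + 1 / (2 * u))"
      unfolding rho_ek_def uu E_def by simp
    moreover have "of_real x * (1 / (2 * u)) = - 1 / (2 * l)"
      unfolding u_def using x0 l0 by (simp add: field_simps)
    ultimately show ?thesis using l0 by (simp add: field_simps)
  qed
  have Eb: "norm E \<le> exp (Re u) + exp (2 * Re u) * (1 + 1 / (2 * norm u)) + 128 * norm u ^ 2 / (Re u) ^ 4"
    unfolding E_def by (rule f_bound) (use Reu xi x0 in simp)
  have "x * norm E \<le> x * (exp (- (\<xi> * x)) + exp (- (\<xi> * x)) * (1 + 1 / (2 * \<xi>)) + 128 * N ^ 2 / (\<xi> ^ 4 * x ^ 2))"
  proof -
    have "exp (2 * Re u) \<le> exp (- (\<xi> * x))" unfolding Reu using xi x0 by simp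
    moreover have "1 / (2 * norm u) \<le> 1 / (2 * \<xi>)"
      unfolding nu using Ng x xi by (intro divide_left_mono mult_left_mono) (auto intro: order.trans[of _ "N"] simp: mult_le_cancel_left1)
    ultimately have "exp (2 * Re u) * (1 + 1 / (2 * norm u)) \<le> exp (- (\<xi> * x)) * (1 + 1 / (2 * \<xi>))"
      using xi by (intro mult_mono add_left_mono) auto
    moreover have "128 * norm u ^ 2 / (Re u) ^ 4 = 128 * N ^ 2 / (\<xi> ^ 4 * x ^ 2)"
      unfolding nu Reu using x0 by (simp add: field_simps power2_eq_square power4_eq_xxxx)
    ultimately show ?thesis using Eb x0 Reu by (intro mult_left_mono) auto
  qed
  also have "\<dots> = (x * exp (- (\<xi> * x))) * (2 + 1 / (2 * \<xi>)) + 128 * N ^ 2 / (\<xi> ^ 4 * x)"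
    using x0 by (simp add: field_simps power2_eq_square)
  also have "\<dots> \<le> (4 / (\<xi> ^ 2 * x)) * (2 + 1 / (2 * \<xi>)) + 128 * N ^ 2 / (\<xi> ^ 4 * x)"
    using x_exp_bound[OF xi x0] xi by (intro add_right_mono mult_right_mono) auto
  also have "\<dots> = ((8 + 2 / \<xi>) * \<xi> ^ 2 + 128 * N ^ 2) / (\<xi> ^ 4 * x)"
    using xi x0 by (simp add: field_simps power2_eq_square power4_eq_xxxx)
  also have "\<dots> \<le> ((8 + 2 / \<xi>) * N ^ 2 + 128 * N ^ 2) / (\<xi> ^ 4 * x)"
    using xi x0 Ng by (intro divide_right_mono add_right_mono mult_left_mono power_mono) auto
  also have "\<dots> = (136 + 2 / \<xi>) / \<xi> ^ 4 * N ^ 2 / x"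
    using xi x0 by (simp add: field_simps)
  finally have xE: "x * norm E \<le> (136 + 2 / \<xi>) / \<xi> ^ 4 * N ^ 2 / x" .
  have "norm (of_real x * rho_ek (- \<xi>) k (of_real x) + 1 / (of_real pi * l)) = (2 / pi) * (x * norm E)"
    unfolding key using x0 by (simp add: norm_mult norm_divide)
  also have "\<dots> \<le> (2 / pi) * ((136 + 2 / \<xi>) / \<xi> ^ 4 * N ^ 2 / x)"
    by (intro mult_left_mono xE) auto
  also have "\<dots> = (2 / pi) * (136 + 2 / \<xi>) / \<xi> ^ 4 * N ^ 2 / x" by (simp add: field_simps)
  finally show ?thesis unfolding l_def N_def .
qed


lemma summable_by_bound:
  fixes f :: "'a \<Rightarrow> complex" and w :: "'a \<Rightarrow> real"
  assumes "w summable_on A" "\<And>k. k \<in> A \<Longrightarrow> norm (f k) \<le> C * w k"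
  shows "f summable_on A"
  unfolding summable_on_iff_abs_summable_on_complex
  by (rule summable_on_comparison_test[OF summable_on_cmult_right[OF assms(1)]]) (use assms(2) in auto)

lemma le_over_x:
  fixes r D :: real assumes "\<And>x. x \<ge> 1 \<Longrightarrow> r \<le> D / x"
  shows "r \<le> 0"
proof (rule ccontr)
  assume "\<not> r \<le> 0" then have r: "r > 0" by simp
  have D: "D \<ge> r" using assms[of 1] by simp
  have "2 * D / r \<ge> 1" using r D by (simp add: field_simps)
  from assms[OF this] have "r \<le> D / (2 * D / r)" .
  also have "\<dots> = r / 2" using r D by (simp add: field_simps)
  finally show False using r by simp
qed

theorem lemma5:
  fixes \<xi> :: real and g :: "real \<Rightarrow> real"
  assumes "\<xi> > 0"
    and "real_analytic g"
    and "\<And>x. g (x + 2 * pi) = exp (- 2 * pi * \<xi>) * g x"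
    and "\<And>x. x > 0 \<Longrightarrow> rho_tilde \<xi> g x > 0"
  shows "(\<Sum>\<^sub>\<infinity>k::int. fourier_coeff \<xi> g k / (of_real \<xi> - \<i> * of_int k)) \<le> 0"
proof -
  note xi = assms(1)
  define c where "c k = fourier_coeff \<xi> g k" for k
  define l where "l k = of_real \<xi> - \<i> * of_int k" for k :: int
  define w where "w k = 1 / (\<xi>\<^sup>2 + (of_int k)\<^sup>2)" for k :: int
  define T where "T = infsum w UNIV"
  define Kc where "Kc = (2 / pi) * (136 + 2 / \<xi>) / \<xi> ^ 4"
  define S where "S = (\<Sum>\<^sub>\<infinity>k::int. c k / l k)"
  obtain M where M0: "M \<ge> 0" and Mb: "\<And>k. norm (c k) \<le> M / norm (l k) ^ 4"
    using fourier_decay[OF assms(1-3)] unfolding c_def l_def by blast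
  have wsum: "w summable_on UNIV" unfolding w_def by (rule summable_int_inv_sq[OF xi])
  have Kc0: "Kc \<ge> 0" unfolding Kc_def using xi by simp
  have nl2: "norm (l k) ^ 2 = \<xi>\<^sup>2 + (of_int k)\<^sup>2" for k unfolding l_def by (simp add: cmod_power2)
  have wl: "w k = 1 / norm (l k) ^ 2" for k unfolding w_def nl2 ..
  have Nge: "norm (l k) \<ge> \<xi>" for k
    unfolding l_def using complex_Re_le_cmod[of "of_real \<xi> - \<i> * of_int k"] by simp
  have N0: "norm (l k) > 0" for k using Nge[of k] xi by linarith
  have bS: "norm (c k / l k) \<le> (M / \<xi> ^ 3) * w k" for k
  proof -
    have "norm (c k / l k) = norm (c k) / norm (l k)" by (simp add: norm_divide)
    also have "\<dots> \<le> (M / norm (l k) ^ 4) / norm (l k)" by (intro divide_right_mono Mb) auto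
    also have "\<dots> = M / norm (l k) ^ 3 * (1 / norm (l k) ^ 2)" using N0[of k] by (simp add: field_simps power2_eq_square power3_eq_cube power4_eq_xxxx)
    also have "\<dots> \<le> M / \<xi> ^ 3 * (1 / norm (l k) ^ 2)"
      using M0 xi Nge[of k] N0[of k] by (intro mult_right_mono divide_left_mono power_mono) auto
    finally show ?thesis unfolding wl .
  qed
  have Ssum: "(\<lambda>k. c k / l k) summable_on UNIV" by (rule summable_by_bound[OF wsum bS])
  have hS: "((\<lambda>k. c k / l k) has_sum S) UNIV" unfolding S_def using Ssum by simp
  have main: "norm (of_real x * rho_tilde \<xi> g x + S / of_real pi) \<le> M * Kc * T / x" 
    and eq: "of_real x * rho_tilde \<xi> g x + S / of_real pi = (\<Sum>\<^sub>\<infinity>k. c k * (of_real x * rho_ek (- \<xi>) k (of_real x) + 1 / (of_real pi * l k)))"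
    if x: "x \<ge> 1" for x
  proof -
    define e where "e k = c k * (of_real x * rho_ek (- \<xi>) k (of_real x) + 1 / (of_real pi * l k))" for k
    define R where "R = infsum e UNIV"
    have be: "norm (e k) \<le> (M * Kc / x) * w k" for k
    proof -
      have "norm (e k) = norm (c k) * norm (of_real x * rho_ek (- \<xi>) k (of_real x) + 1 / (of_real pi * l k))"
        unfolding e_def by (simp add: norm_mult)
      also have "\<dots> \<le> (M / norm (l k) ^ 4) * (Kc * norm (l k) ^ 2 / x)"
        using rho_k_bound[OF xi x, of k] Mb[of k] M0 N0[of k] unfolding Kc_def l_def
        by (intro mult_mono) auto
      also have "\<dots> = (M * Kc / x) * (1 / norm (l k) ^ 2)" using N0[of k] by (simp add: field_simps power2_eq_square power4_eq_xxxx)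
      finally show ?thesis unfolding wl .
    qed
    have esum: "e summable_on UNIV" by (rule summable_by_bound[OF wsum be])
    have hE: "(e has_sum R) UNIV" unfolding R_def using esum by simp
    have hw: "((\<lambda>k. (M * Kc / x) * w k) has_sum (M * Kc / x) * T) UNIV"
      unfolding T_def by (rule has_sum_cmult_right[OF has_sum_infsum[OF wsum]])
    have "norm R \<le> (M * Kc / x) * T" by (rule norm_infsum_le[OF hE hw be])
    have hx: "((\<lambda>k. c k * (of_real x * rho_ek (- \<xi>) k (of_real x))) has_sum (- (1 / of_real pi) * S + R)) UNIV"
    proof -
      have "((\<lambda>k. - (1 / of_real pi) * (c k / l k) + e k) has_sum (- (1 / of_real pi) * S + R)) UNIV"
        by (intro has_sum_add has_sum_cmult_right hS hE)
      moreover have "- (1 / of_real pi) * (c k / l k) + e k = c k * (of_real x * rho_ek (- \<xi>) k (of_real x))" for k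
        unfolding e_def by (simp add: field_simps)
      ultimately show ?thesis by simp
    qed
    have "((\<lambda>k. c k * rho_ek (- \<xi>) k (of_real x)) has_sum (1 / of_real x) * (- (1 / of_real pi) * S + R)) UNIV"
    proof -
      have "((\<lambda>k. (1 / of_real x) * (c k * (of_real x * rho_ek (- \<xi>) k (of_real x)))) has_sum (1 / of_real x) * (- (1 / of_real pi) * S + R)) UNIV"
        by (rule has_sum_cmult_right[OF hx])
      moreover have "(1 / of_real x) * (c k * (of_real x * rho_ek (- \<xi>) k (of_real x))) = c k * rho_ek (- \<xi>) k (of_real x)" for k
        using x by (simp add: field_simps)
      ultimately show ?thesis by simp
    qed
    then have "rho_tilde \<xi> g x = (1 / of_real x) * (- (1 / of_real pi) * S + R)"
      unfolding rho_tilde_def c_def by (rule infsumI)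
    then have rt: "of_real x * rho_tilde \<xi> g x + S / of_real pi = R" using x by (simp add: field_simps)
    show "norm (of_real x * rho_tilde \<xi> g x + S / of_real pi) \<le> M * Kc * T / x"
      unfolding rt using \<open>norm R \<le> _\<close> by simp
    show "of_real x * rho_tilde \<xi> g x + S / of_real pi = (\<Sum>\<^sub>\<infinity>k. c k * (of_real x * rho_ek (- \<xi>) k (of_real x) + 1 / (of_real pi * l k)))"
      unfolding rt R_def e_def ..
  qed
  define D where "D = pi * (M * Kc * T)"
  have ReS: "Re S \<le> D / x" and ImS: "\<bar>Im S\<bar> \<le> D / x" if x: "x \<ge> 1" for x
  proof -
    define Z where "Z = of_real x * rho_tilde \<xi> g x + S / of_real pi"
    have pos: "rho_tilde \<xi> g x > 0" using assms(4) x by simp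
    then have p1: "Re (rho_tilde \<xi> g x) > 0" and p2: "Im (rho_tilde \<xi> g x) = 0"
      by (auto simp: less_complex_def)
    have nZ: "norm Z \<le> M * Kc * T / x" unfolding Z_def by (rule main[OF x])
    have "Re Z = x * Re (rho_tilde \<xi> g x) + Re S / pi" unfolding Z_def by simp
    moreover have "Im Z = Im S / pi" unfolding Z_def using p2 by simp
    moreover have "Re Z \<le> norm Z" "\<bar>Im Z\<bar> \<le> norm Z" by (auto simp: complex_Re_le_cmod abs_Im_le_cmod)
    ultimately have "Re S / pi < M * Kc * T / x" "\<bar>Im S\<bar> / pi \<le> M * Kc * T / x"
      using nZ p1 x by (auto intro: add_pos_nonneg simp: abs_divide)
      (smt (verit, best) mult_pos_pos)
    then show "Re S \<le> D / x" "\<bar>Im S\<bar> \<le> D / x" unfolding D_def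
      by (auto simp: field_simps)
  qed
  have "Re S \<le> 0" by (rule le_over_x[OF ReS])
  moreover have "\<bar>Im S\<bar> \<le> 0" by (rule le_over_x[OF ImS])
  ultimately have "S \<le> 0" by (simp add: less_eq_complex_def)
  then show ?thesis unfolding S_def c_def l_def .
qed

end
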